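(* Let $W$ be the function on pairs of integers defined as in the context. Let $k \ge 1$ be an integer. Then for all integers $n, m$ with $n \ge m \ge 1$ and $m \le k$, $$W(n,m)\ \ge\ \frac{\sqrt{2k-2}}{k}\cdot\frac{m}{\sqrt{n+m}}.$$
   Context: $W:\mathbb{Z}\times\mathbb{Z}\to[0,1]$ is defined recursively (by induction on $n+m$) as follows: - $W(n,m)=0$ if $m\le 0$; - $W(n,m)=1$ if $m\ge 1$ and $n<m$; - for $n\ge m\ge 1$, $W(n,m)=\frac{n}{n+m}W(n-2,m)+\frac{m}{n+m}W(n-1,m-1)$. $W(n,m)$ is the probability that the mafia wins the mafia game without detectives, started with $n$ civilians and $m$ mafia members, when both sides play uniformly at random. *)

theory Defs
  imports Complex_Main
begin

(* W(n,m): probability that the mafia wins (no detectives), n civilians, m mafia *)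
function W :: "int \<Rightarrow> int \<Rightarrow> real" where
  "W n m = (if m \<le> 0 then 0
            else if n < m then 1
            else (real_of_int n / real_of_int (n + m)) * W (n - 2) m
               + (real_of_int m / real_of_int (n + m)) * W (n - 1) (m - 1))"
  by pat_completeness auto
termination
  by (relation "measure (\<lambda>(n, m). nat (n + m))") auto

declare W.simps [simp del]

end

theory Submission
  imports Defs
begin

lemma W0: "m \<le> 0 \<Longrightarrow> W n m = 0" by (subst W.simps) simp
lemma W1: "m \<ge> 1 \<Longrightarrow> n < m \<Longrightarrow> W n m = 1" by (subst W.simps) simp

lemma key:
  fixes c :: real and k :: int
  assumes c0: "c \<ge> 0" and c1: "c^2 \<le> 1/2"
    and H: "\<And>m::int. 2 \<le> m \<Longrightarrow> m \<le> k \<Longrightarrow> c^2 * (real_of_int m)^2 \<le> 2 * real_of_int m - 2"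
  shows "m \<ge> 1 \<Longrightarrow> m \<le> k \<Longrightarrow> n \<ge> m - 2 \<Longrightarrow> c * real_of_int m / sqrt (real_of_int (n + m)) \<le> W n m"
proof (induction n m rule: W.induct)
  case (1 n m)
  show ?case
  proof (cases "n < m")
    case True
    hence W1: "W n m = 1" using "1.prems" by (subst W.simps) simp
    have "c * real_of_int m / sqrt (real_of_int (n + m)) \<le> 1"
    proof (cases "m = 1")
      case True
      hence "n + m = 0 \<or> n + m = 1" using "1.prems" \<open>n<m\<close> by auto
      moreover have "c \<le> 1"
      proof -
        have "c^2 \<le> 1^2" using c1 by simp
        thus ?thesis by (rule power2_le_imp_le) simp
      qed
      ultimately show ?thesis
      proof (elim disjE)
        assume "n + m = 0"
        hence "real_of_int (n + m) = 0" by simp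
        thus ?thesis by (simp only: real_sqrt_zero div_by_0)
      next
        assume "n + m = 1"
        hence "real_of_int (n + m) = 1" by simp
        thus ?thesis using \<open>c \<le> 1\<close> True by (simp only: real_sqrt_one div_by_1)
      qed
    next
      case False
      hence m2: "m \<ge> 2" using "1.prems" by auto
      have sq: "(c * real_of_int m)^2 \<le> real_of_int (n + m)"
        using H[OF m2 "1.prems"(2)] "1.prems"(3) by (simp add: power_mult_distrib)
      have "c * real_of_int m \<le> sqrt (real_of_int (n + m))"
        using sq real_le_rsqrt by blast
      moreover have "real_of_int (n+m) > 0" using m2 "1.prems" by simp
      ultimately show ?thesis by simp
    qed
    thus ?thesis using W1 by simp
  next
    case False
    hence nm: "n \<ge> m" by simp
    have Weq: "W n m = (real_of_int n / real_of_int (n + m)) * W (n - 2) m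
               + (real_of_int m / real_of_int (n + m)) * W (n - 1) (m - 1)"
      using "1.prems" nm by (subst W.simps) simp
    show ?thesis
    proof (cases "n = 1 \<and> m = 1")
      case True
      have "W 1 1 = 1/2" by (subst W.simps) (simp add: W0 W1)
      moreover have "c / sqrt 2 \<le> 1/2"
      proof -
        have "c \<le> sqrt 2 / 2"
        proof -
          have "c^2 \<le> (sqrt 2 / 2)^2" using c1 by (simp add: power_divide)
          thus ?thesis by (rule power2_le_imp_le) simp
        qed
        thus ?thesis by (simp add: field_simps)
      qed
      moreover have "c * real_of_int m / sqrt (real_of_int (n + m)) = c / sqrt 2" using True by simp
      moreover have "W n m = W 1 1" using True by simp
      ultimately show ?thesis by linarith
    next
      case False
      define s where "s = real_of_int (n + m)"
      have s3: "s \<ge> 3" using False nm "1.prems" unfolding s_def by auto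
      have IH1: "c * real_of_int m / sqrt (s - 2) \<le> W (n - 2) m"
        using "1.IH"(1)[of ] "1.prems" nm unfolding s_def by (auto simp: algebra_simps)
      have IH2: "c * real_of_int (m - 1) / sqrt (s - 2) \<le> W (n - 1) (m - 1)"
      proof (cases "m = 1")
        case True thus ?thesis by (simp add: W0)
      next
        case False
        thus ?thesis using "1.IH"(2) "1.prems" nm unfolding s_def by (auto simp: algebra_simps)
      qed
      define a where "a = sqrt s"
      define b where "b = sqrt (s - 2)"
      have a2: "a^2 = s" using s3 unfolding a_def by simp
      have b0: "b > 0" using s3 unfolding b_def by simp
      have a0: "a > 0" using s3 unfolding a_def by simp
      have ab: "a * b \<le> s - 1"
      proof -
        have "a * b = sqrt (s * (s - 2))" unfolding a_def b_def by (simp add: real_sqrt_mult)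
        also have "\<dots> \<le> sqrt ((s-1)^2)" by (rule real_sqrt_le_mono) (simp add: power2_eq_square algebra_simps)
        also have "\<dots> = s - 1" using s3 by simp
        finally show ?thesis .
      qed
      have rn: "real_of_int n \<ge> 0" "real_of_int m \<ge> 1" using nm "1.prems" by auto
      have "real_of_int n / s * W (n - 2) m \<ge> real_of_int n / s * (c * real_of_int m / b)"
        using IH1 rn s3 unfolding b_def by (intro mult_left_mono) auto
      moreover have "real_of_int m / s * W (n - 1) (m - 1) \<ge> real_of_int m / s * (c * real_of_int (m-1) / b)"
        using IH2 rn s3 unfolding b_def by (intro mult_left_mono) auto
      moreover have "real_of_int n / s * (c * real_of_int m / b) + real_of_int m / s * (c * real_of_int (m-1) / b)
          = c * real_of_int m * (s - 1) / (s * b)"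
      proof -
        have sp: "s \<noteq> 0" "b \<noteq> 0" using s3 b0 by auto
        have "real_of_int n / s * (c * real_of_int m / b) + real_of_int m / s * (c * real_of_int (m-1) / b)
          = c * real_of_int m * (real_of_int n + real_of_int m - 1) / (s * b)"
          using sp by (simp add: field_simps)
        also have "real_of_int n + real_of_int m - 1 = s - 1" unfolding s_def by simp
        finally show ?thesis .
      qed
      moreover have "c * real_of_int m / a \<le> c * real_of_int m * (s - 1) / (s * b)"
      proof -
        have "1 / a \<le> (s - 1) / (s * b)"
        proof -
          have "s * b = a * (a * b)" using a2 by (simp add: power2_eq_square)
          also have "\<dots> \<le> a * (s - 1)" using ab a0 by simp
          finally have "s * b \<le> a * (s - 1)" .
          thus ?thesis using a0 b0 s3 by (simp add: field_simps)
        qed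
        hence "c * real_of_int m * (1 / a) \<le> c * real_of_int m * ((s - 1) / (s * b))"
          using c0 rn by (intro mult_left_mono) auto
        thus ?thesis by simp
      qed
      ultimately show ?thesis using Weq unfolding a_def s_def by linarith
    qed
  qed
qed

theorem theorem2:
  fixes k n m :: int
  assumes "k \<ge> 1" and "n \<ge> m" and "m \<ge> 1" and "m \<le> k"
  shows "W n m \<ge> sqrt (2 * real_of_int k - 2) / real_of_int k
                   * (real_of_int m / sqrt (real_of_int (n + m)))"
proof -
  define c where "c = sqrt (2 * real_of_int k - 2) / real_of_int k"
  have k1: "real_of_int k \<ge> 1" using assms by simp
  have c0: "c \<ge> 0" using k1 unfolding c_def by simp
  have c2: "c^2 = (2 * real_of_int k - 2) / (real_of_int k)^2"
    using k1 unfolding c_def by (simp add: power_divide)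
  have c1: "c^2 \<le> 1/2"
  proof -
    have "2 * (2 * real_of_int k - 2) \<le> (real_of_int k)^2"
      using sum_squares_ge_zero[of "real_of_int k - 2" 0] by (simp add: power2_eq_square algebra_simps)
    moreover have kp: "(real_of_int k)^2 > 0" using k1 by simp
    ultimately have "(2 * real_of_int k - 2) / (real_of_int k)^2 \<le> 1/2"
      by (simp add: divide_le_eq)
    thus ?thesis using c2 by simp
  qed
  have H: "c^2 * (real_of_int j)^2 \<le> 2 * real_of_int j - 2" if "2 \<le> j" "j \<le> k" for j :: int
  proof -
    have j: "real_of_int j \<ge> 2" "real_of_int j \<le> real_of_int k" using that by auto
    have "(real_of_int j - real_of_int k) * (real_of_int k * real_of_int j - real_of_int j - real_of_int k) \<le> 0"
    proof (rule mult_nonpos_nonneg)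
      show "real_of_int j - real_of_int k \<le> 0" using j by simp
      have "(real_of_int k - 1) * (real_of_int j - 1) \<ge> 1 * 1"
        using j by (intro mult_mono) auto
      thus "0 \<le> real_of_int k * real_of_int j - real_of_int j - real_of_int k" by (simp add: algebra_simps)
    qed
    hence "(2 * real_of_int k - 2) * (real_of_int j)^2 \<le> (2 * real_of_int j - 2) * (real_of_int k)^2"
      by (simp add: power2_eq_square algebra_simps)
    moreover have kp: "(real_of_int k)^2 > 0" using k1 by simp
    ultimately have "(2 * real_of_int k - 2) * (real_of_int j)^2 / (real_of_int k)^2 \<le> 2 * real_of_int j - 2"
      by (simp add: divide_le_eq)
    thus ?thesis using c2 by simp
  qed
  have "c * real_of_int m / sqrt (real_of_int (n + m)) \<le> W n m"
    using key[OF c0 c1 H] assms by auto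
  thus ?thesis unfolding c_def by simp
qed

end
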